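(* For every temporal oriented tree $\mathcal T$, the connectivity graph $G$ of $\mathcal T$ contains no induced cycle of length $6$.
   Context: A temporal digraph is a pair $(D,\lambda)$ with $D=(V,A)$ a finite digraph and $\lambda:A\to 2^{\{1,\dots,t_{\max}\}}$ giving the time-steps at which each arc is active. A temporal oriented tree $\mathcal T=(T,\lambda)$ is one whose underlying digraph $T$ is an orientation of a tree. A temporal path is a sequence $(v_1,v_2,t_1),\dots,(v_{k-1},v_k,t_{k-1})$ with pairwise distinct $v_i$, $\overrightarrow{v_iv_{i+1}}\in A$, $t_i\in\lambda(\overrightarrow{v_iv_{i+1}})$ and $t_1<\dots<t_{k-1}$. Two vertices $u\ne v$ are temporally connected if there is a temporal path from $u$ to $v$ or from $v$ to $u$. The connectivity graph of $\mathcal T$ is the undirected graph $G$ with $V(G)=V(T)$ and $uv\in E(G)$ iff $u\neq v$ and $u,v$ are temporally connected. *)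

theory Defs
  imports Main
begin

definition temporal_digraph ::
  "'a set \<Rightarrow> ('a \<times> 'a) set \<Rightarrow> ('a \<times> 'a \<Rightarrow> nat set) \<Rightarrow> nat \<Rightarrow> bool" where
  "temporal_digraph V A lam tmax \<longleftrightarrow>
     finite V \<and> A \<subseteq> V \<times> V \<and> (\<forall>a\<in>A. lam a \<subseteq> {1..tmax})"

definition und_adj :: "('a \<times> 'a) set \<Rightarrow> 'a \<Rightarrow> 'a \<Rightarrow> bool" where
  "und_adj A u v \<longleftrightarrow> (u, v) \<in> A \<or> (v, u) \<in> A"

definition und_connected :: "'a set \<Rightarrow> ('a \<times> 'a) set \<Rightarrow> bool" where
  "und_connected V A \<longleftrightarrow> (\<forall>u\<in>V. \<forall>v\<in>V. (u, v) \<in> (A \<union> A\<inverse>)\<^sup>*)"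

definition und_acyclic :: "'a set \<Rightarrow> ('a \<times> 'a) set \<Rightarrow> bool" where
  "und_acyclic V A \<longleftrightarrow>
     \<not> (\<exists>cs. length cs \<ge> 3 \<and> distinct cs \<and> set cs \<subseteq> V \<and>
            (\<forall>i. Suc i < length cs \<longrightarrow> und_adj A (cs ! i) (cs ! Suc i)) \<and>
            und_adj A (last cs) (hd cs))"

definition oriented_tree :: "'a set \<Rightarrow> ('a \<times> 'a) set \<Rightarrow> bool" where
  "oriented_tree V A \<longleftrightarrow>
     A \<subseteq> V \<times> V \<and> (\<forall>(u, v)\<in>A. u \<noteq> v \<and> (v, u) \<notin> A) \<and>
     und_connected V A \<and> und_acyclic V A"

definition temporal_oriented_tree ::
  "'a set \<Rightarrow> ('a \<times> 'a) set \<Rightarrow> ('a \<times> 'a \<Rightarrow> nat set) \<Rightarrow> nat \<Rightarrow> bool" where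
  "temporal_oriented_tree V A lam tmax \<longleftrightarrow>
     temporal_digraph V A lam tmax \<and> oriented_tree V A"

definition temporal_path ::
  "('a \<times> 'a) set \<Rightarrow> ('a \<times> 'a \<Rightarrow> nat set) \<Rightarrow> 'a list \<Rightarrow> nat list \<Rightarrow> bool" where
  "temporal_path A lam vs ts \<longleftrightarrow>
     length vs \<ge> 2 \<and> length ts = length vs - 1 \<and> distinct vs \<and>
     (\<forall>i < length ts. (vs ! i, vs ! Suc i) \<in> A \<and> ts ! i \<in> lam (vs ! i, vs ! Suc i)) \<and>
     sorted_wrt (<) ts"

definition temporal_path_from_to ::
  "('a \<times> 'a) set \<Rightarrow> ('a \<times> 'a \<Rightarrow> nat set) \<Rightarrow> 'a \<Rightarrow> 'a \<Rightarrow> bool" where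
  "temporal_path_from_to A lam u v \<longleftrightarrow>
     (\<exists>vs ts. temporal_path A lam vs ts \<and> hd vs = u \<and> last vs = v)"

definition temporally_connected ::
  "('a \<times> 'a) set \<Rightarrow> ('a \<times> 'a \<Rightarrow> nat set) \<Rightarrow> 'a \<Rightarrow> 'a \<Rightarrow> bool" where
  "temporally_connected A lam u v \<longleftrightarrow>
     u \<noteq> v \<and> (temporal_path_from_to A lam u v \<or> temporal_path_from_to A lam v u)"

definition conn_graph_adj ::
  "'a set \<Rightarrow> ('a \<times> 'a) set \<Rightarrow> ('a \<times> 'a \<Rightarrow> nat set) \<Rightarrow> 'a \<Rightarrow> 'a \<Rightarrow> bool" where
  "conn_graph_adj V A lam u v \<longleftrightarrow> u \<in> V \<and> v \<in> V \<and> temporally_connected A lam u v"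

definition has_induced_cycle ::
  "'a set \<Rightarrow> ('a \<Rightarrow> 'a \<Rightarrow> bool) \<Rightarrow> nat \<Rightarrow> bool" where
  "has_induced_cycle V adj k \<longleftrightarrow>
     (\<exists>c :: nat \<Rightarrow> 'a. inj_on c {0..<k} \<and> c ` {0..<k} \<subseteq> V \<and>
        (\<forall>i<k. \<forall>j<k. i \<noteq> j \<longrightarrow>
           (adj (c i) (c j) \<longleftrightarrow> (j = Suc i mod k \<or> i = Suc j mod k))))"

end

theory Submission imports Defs begin

fun twalk :: "('a \<times> 'a) set \<Rightarrow> ('a \<times> 'a \<Rightarrow> nat set) \<Rightarrow> 'a list \<Rightarrow> nat list \<Rightarrow> bool" where
  "twalk A lam [v] [] = True"
| "twalk A lam (u # v # vs) (t # ts) =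
     ((u, v) \<in> A \<and> t \<in> lam (u, v) \<and> (\<forall>s\<in>set ts. t < s) \<and> twalk A lam (v # vs) ts)"
| "twalk A lam _ _ = False"

lemma twalk_iff:
  "twalk A lam vs ts \<longleftrightarrow> vs \<noteq> [] \<and> length ts = length vs - 1 \<and>
     (\<forall>i < length ts. (vs ! i, vs ! Suc i) \<in> A \<and> ts ! i \<in> lam (vs ! i, vs ! Suc i)) \<and>
     sorted_wrt (<) ts"
proof (induction vs arbitrary: ts)
  case Nil then show ?case by (cases ts) auto
next
  case (Cons u rest)
  show ?case
  proof (cases rest)
    case Nil then show ?thesis by (cases ts) auto
  next
    case (Cons v vs')
    show ?thesis
    proof (cases ts)
      case Nil then show ?thesis using Cons by simp
    next
      case (Cons t ts')
      have "twalk A lam (u # v # vs') (t # ts') \<longleftrightarrow>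
        ((u, v) \<in> A \<and> t \<in> lam (u, v) \<and> (\<forall>s\<in>set ts'. t < s) \<and> twalk A lam (v # vs') ts')" by simp
      also have "\<dots> \<longleftrightarrow> ((u, v) \<in> A \<and> t \<in> lam (u, v) \<and> (\<forall>s\<in>set ts'. t < s) \<and>
         (length ts' = length (v#vs') - 1 \<and>
     (\<forall>i < length ts'. ((v#vs') ! i, (v#vs') ! Suc i) \<in> A \<and> ts' ! i \<in> lam ((v#vs') ! i, (v#vs') ! Suc i)) \<and>
     sorted_wrt (<) ts'))"
        using Cons.IH[of ts'] \<open>rest = v # vs'\<close> by simp
      also have "\<dots> \<longleftrightarrow> (length (t#ts') = length (u#v#vs') - 1 \<and>
     (\<forall>i < length (t#ts'). ((u#v#vs') ! i, (u#v#vs') ! Suc i) \<in> A \<and> (t#ts') ! i \<in> lam ((u#v#vs') ! i, (u#v#vs') ! Suc i)) \<and>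
     sorted_wrt (<) (t#ts'))"
        by (auto simp: less_Suc_eq_0_disj)
      finally show ?thesis using \<open>rest = v # vs'\<close> Cons by simp
    qed
  qed
qed

lemma tp_iff: "temporal_path A lam vs ts \<longleftrightarrow> 2 \<le> length vs \<and> distinct vs \<and> twalk A lam vs ts"
  unfolding temporal_path_def twalk_iff by auto

lemma twalk_sorted: "twalk A lam vs ts \<Longrightarrow> sorted_wrt (<) ts"
  by (simp add: twalk_iff)

lemma twalk_len: "twalk A lam vs ts \<Longrightarrow> length ts = length vs - 1"
  by (simp add: twalk_iff)

lemma twalk_split:
  "twalk A lam (xs @ x # ys) ts \<Longrightarrow>
   \<exists>a b. ts = a @ b \<and> twalk A lam (xs @ [x]) a \<and> twalk A lam (x # ys) b"
proof (induction xs arbitrary: ts)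
  case Nil then show ?case by (intro exI[of _ "[]"] exI[of _ ts]) auto
next
  case (Cons u xs)
  then obtain t ts' where ts: "ts = t # ts'" by (cases ts) (cases xs; auto)+
  show ?case
  proof (cases xs)
    case Nil
    then show ?thesis using Cons.prems ts by (intro exI[of _ "[t]"] exI[of _ ts']) auto
  next
    case (Cons w xs')
    with Cons.prems ts have *: "(u, w) \<in> A" "t \<in> lam (u, w)" "\<forall>s\<in>set ts'. t < s"
       "twalk A lam (xs @ x # ys) ts'" by auto
    from Cons.IH[OF *(4)] obtain a b where ab: "ts' = a @ b" "twalk A lam (xs @ [x]) a"
      "twalk A lam (x # ys) b" by blast
    show ?thesis using * ab ts Cons by (intro exI[of _ "t # a"] exI[of _ b]) auto
  qed
qed

lemma twalk_app:
  "twalk A lam (xs @ [x]) a \<Longrightarrow> twalk A lam (x # ys) b \<Longrightarrow> (\<forall>s\<in>set a. \<forall>s'\<in>set b. s < s')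
   \<Longrightarrow> twalk A lam (xs @ x # ys) (a @ b)"
proof (induction xs arbitrary: a)
  case Nil then show ?case by (cases a) auto
next
  case (Cons u xs)
  show ?case
  proof (cases xs)
    case Nil
    with Cons.prems obtain t where "a = [t]" by (cases a) (auto elim: twalk.elims)
    then show ?thesis using Cons.prems Nil by auto
  next
    case (Cons w xs')
    with Cons.prems obtain t a' where a: "a = t # a'" by (cases a) auto
    with Cons.prems Cons have *: "(u, w) \<in> A" "t \<in> lam (u, w)" "\<forall>s\<in>set a'. t < s"
       "twalk A lam (xs @ [x]) a'" by auto
    have "twalk A lam (xs @ x # ys) (a' @ b)" using Cons.IH[OF *(4) Cons.prems(2)] Cons.prems(3) a by auto
    then show ?thesis using * a Cons Cons.prems(3) by auto
  qed
qed

lemma sorted_last: "sorted_wrt (<) (l::nat list) \<Longrightarrow> s \<in> set l \<Longrightarrow> s \<le> last l"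
  by (induction l) (auto simp: less_imp_le)

lemma sorted_hd: "sorted_wrt (<) (l::nat list) \<Longrightarrow> s \<in> set l \<Longrightarrow> hd l \<le> s"
  by (induction l) (auto simp: less_imp_le)

lemma twalk_hd_last_ne: "twalk A lam vs ts \<Longrightarrow> vs \<noteq> []"
  by (simp add: twalk_iff)

lemma shortcut:
  "twalk A lam vs ts \<Longrightarrow> hd vs \<noteq> last vs \<Longrightarrow> temporal_path_from_to A lam (hd vs) (last vs)"
proof (induction "length vs" arbitrary: vs ts rule: less_induct)
  case less
  show ?case
  proof (cases "distinct vs")
    case True
    have "vs \<noteq> []" using less.prems twalk_hd_last_ne by metis
    have "length vs \<noteq> 1" using less.prems(2) \<open>vs \<noteq> []\<close>
      by (cases vs) auto
    hence "2 \<le> length vs" using \<open>vs \<noteq> []\<close> by (cases vs) (auto simp: Suc_le_eq)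
    then show ?thesis unfolding temporal_path_from_to_def using True less.prems
      by (auto simp: tp_iff)
  next
    case False
    then obtain xs y ys zs where vs: "vs = xs @ y # (ys @ y # zs)"
      using not_distinct_decomp by fastforce
    from twalk_split[OF less.prems(1)[unfolded vs]] obtain a b where
      ab: "ts = a @ b" "twalk A lam (xs @ [y]) a" "twalk A lam (y # ys @ y # zs) b" by blast
    from twalk_split[of A lam "y # ys" y zs b] ab(3) obtain b1 b2 where
      b: "b = b1 @ b2" "twalk A lam ((y # ys) @ [y]) b1" "twalk A lam (y # zs) b2" by auto
    have srt: "sorted_wrt (<) (a @ b1 @ b2)" using twalk_sorted[OF less.prems(1)] ab b by simp
    have "twalk A lam (xs @ y # zs) (a @ b2)"
      using twalk_app[OF ab(2) b(3)] srt by (auto simp: sorted_wrt_append)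
    moreover have "length (xs @ y # zs) < length vs" using vs by simp
    moreover have "hd (xs @ y # zs) = hd vs" "last (xs @ y # zs) = last vs" using vs
      by (cases xs; simp)+
    ultimately show ?thesis using less by metis
  qed
qed


definition EE :: "('a \<times> 'a) set \<Rightarrow> ('a \<times> 'a \<Rightarrow> nat set) \<Rightarrow> 'a \<Rightarrow> 'a \<Rightarrow> bool" where
  "EE A lam u v \<longleftrightarrow> u = v \<or> temporal_path_from_to A lam u v"

lemma concat_E:
  assumes "twalk A lam (xs1 @ [x]) a1" "twalk A lam (x # ys2) b2"
    "xs1 = [] \<or> ys2 = [] \<or> last a1 < hd b2"
  shows "EE A lam (hd (xs1 @ [x])) (last (x # ys2))"
proof -
  have la: "length a1 = length xs1" using twalk_len[OF assms(1)] by simp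
  have lb: "length b2 = length ys2" using twalk_len[OF assms(2)] by simp
  have "\<forall>s\<in>set a1. \<forall>s'\<in>set b2. s < s'"
  proof (intro ballI)
    fix s s' assume s: "s \<in> set a1" and s': "s' \<in> set b2"
    hence "xs1 \<noteq> []" "ys2 \<noteq> []" using la lb by auto
    hence "last a1 < hd b2" using assms(3) by simp
    moreover have "s \<le> last a1" using sorted_last[OF twalk_sorted[OF assms(1)] s] .
    moreover have "hd b2 \<le> s'" using sorted_hd[OF twalk_sorted[OF assms(2)] s'] .
    ultimately show "s < s'" by simp
  qed
  hence w: "twalk A lam (xs1 @ x # ys2) (a1 @ b2)" using twalk_app[OF assms(1,2)] by simp
  have "hd (xs1 @ x # ys2) = hd (xs1 @ [x])" "last (xs1 @ x # ys2) = last (x # ys2)"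
    by (cases xs1; simp)+
  then show ?thesis using shortcut[OF w] unfolding EE_def by metis
qed

lemma split_tp:
  assumes "temporal_path A lam vs ts" "x \<in> set vs"
  shows "\<exists>xs ys a b. vs = xs @ x # ys \<and> twalk A lam (xs @ [x]) a \<and> twalk A lam (x # ys) b \<and>
     (xs \<noteq> [] \<longrightarrow> ys \<noteq> [] \<longrightarrow> last a < hd b)"
proof -
  obtain xs ys where vs: "vs = xs @ x # ys" using split_list[OF assms(2)] by blast
  have tw: "twalk A lam vs ts" using assms(1) by (simp add: tp_iff)
  obtain a b where ab: "ts = a @ b" "twalk A lam (xs @ [x]) a" "twalk A lam (x # ys) b"
    using twalk_split[OF tw[unfolded vs]] by blast
  have "xs \<noteq> [] \<longrightarrow> ys \<noteq> [] \<longrightarrow> last a < hd b"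
  proof (intro impI)
    assume "xs \<noteq> []" "ys \<noteq> []"
    hence "a \<noteq> []" "b \<noteq> []" using twalk_len[OF ab(2)] twalk_len[OF ab(3)] by auto
    moreover have "sorted_wrt (<) (a @ b)" using twalk_sorted[OF tw] ab by simp
    ultimately show "last a < hd b" by (auto simp: sorted_wrt_append)
  qed
  then show ?thesis using vs ab by blast
qed

lemma pair_E:
  assumes "temporal_path A lam v1 t1" "temporal_path A lam v2 t2" "x \<in> set v1" "x \<in> set v2"
  shows "EE A lam (hd v1) (last v2) \<or> EE A lam (hd v2) (last v1)"
proof -
  obtain xs1 ys1 a1 b1 where s1: "v1 = xs1 @ x # ys1" "twalk A lam (xs1 @ [x]) a1" "twalk A lam (x # ys1) b1"
     "xs1 \<noteq> [] \<longrightarrow> ys1 \<noteq> [] \<longrightarrow> last a1 < hd b1" using split_tp[OF assms(1,3)] by blast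
  obtain xs2 ys2 a2 b2 where s2: "v2 = xs2 @ x # ys2" "twalk A lam (xs2 @ [x]) a2" "twalk A lam (x # ys2) b2"
     "xs2 \<noteq> [] \<longrightarrow> ys2 \<noteq> [] \<longrightarrow> last a2 < hd b2" using split_tp[OF assms(2,4)] by blast
  have h: "hd v1 = hd (xs1 @ [x])" "last v1 = last (x # ys1)" "hd v2 = hd (xs2 @ [x])" "last v2 = last (x # ys2)"
    using s1 s2 by (cases xs1; cases xs2; simp)+
  have "(xs1 = [] \<or> ys2 = [] \<or> last a1 < hd b2) \<or> (xs2 = [] \<or> ys1 = [] \<or> last a2 < hd b1)"
    using s1(4) s2(4) by auto
  then show ?thesis using concat_E[OF s1(2) s2(3)] concat_E[OF s2(2) s1(3)] h by metis
qed

lemma triple: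
  assumes P: "temporal_path A lam vP tP" "(hd vP = a0 \<and> last vP = a1) \<or> (hd vP = a1 \<and> last vP = a0)"
    and Q: "temporal_path A lam vQ tQ" "(hd vQ = a2 \<and> last vQ = a3) \<or> (hd vQ = a3 \<and> last vQ = a2)"
    and R: "temporal_path A lam vR tR" "(hd vR = a4 \<and> last vR = a5) \<or> (hd vR = a5 \<and> last vR = a4)"
    and x: "x \<in> set vP" "x \<in> set vQ" "x \<in> set vR"
    and d: "a0 \<noteq> a1" "a2 \<noteq> a3" "a4 \<noteq> a5"
    and nePQ: "\<And>u v. u \<in> {a0,a1} \<Longrightarrow> v \<in> {a2,a3} \<Longrightarrow> (u,v) \<noteq> (a1,a2) \<Longrightarrow> \<not> EE A lam u v \<and> \<not> EE A lam v u"
    and neQR: "\<And>u v. u \<in> {a2,a3} \<Longrightarrow> v \<in> {a4,a5} \<Longrightarrow> (u,v) \<noteq> (a3,a4) \<Longrightarrow> \<not> EE A lam u v \<and> \<not> EE A lam v u"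
    and neRP: "\<And>u v. u \<in> {a4,a5} \<Longrightarrow> v \<in> {a0,a1} \<Longrightarrow> (u,v) \<noteq> (a5,a0) \<Longrightarrow> \<not> EE A lam u v \<and> \<not> EE A lam v u"
  shows False
proof -
  obtain xs1 ys1 ta1 tb1 where s1: "vP = xs1 @ x # ys1" "twalk A lam (xs1 @ [x]) ta1" "twalk A lam (x # ys1) tb1"
     "xs1 \<noteq> [] \<longrightarrow> ys1 \<noteq> [] \<longrightarrow> last ta1 < hd tb1" using split_tp[OF P(1) x(1)] by blast
  obtain xs2 ys2 ta2 tb2 where s2: "vQ = xs2 @ x # ys2" "twalk A lam (xs2 @ [x]) ta2" "twalk A lam (x # ys2) tb2"
     "xs2 \<noteq> [] \<longrightarrow> ys2 \<noteq> [] \<longrightarrow> last ta2 < hd tb2" using split_tp[OF Q(1) x(2)] by blast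
  obtain xs3 ys3 ta3 tb3 where s3: "vR = xs3 @ x # ys3" "twalk A lam (xs3 @ [x]) ta3" "twalk A lam (x # ys3) tb3"
     "xs3 \<noteq> [] \<longrightarrow> ys3 \<noteq> [] \<longrightarrow> last ta3 < hd tb3" using split_tp[OF R(1) x(3)] by blast
  have h: "hd vP = hd (xs1 @ [x])" "last vP = last (x # ys1)" "hd vQ = hd (xs2 @ [x])" "last vQ = last (x # ys2)"
    "hd vR = hd (xs3 @ [x])" "last vR = last (x # ys3)"
    using s1 s2 s3 by (cases xs1; cases xs2; cases xs3; simp)+
  define c12 where "c12 = (xs1 = [] \<or> ys2 = [] \<or> last ta1 < hd tb2)"
  define c21 where "c21 = (xs2 = [] \<or> ys1 = [] \<or> last ta2 < hd tb1)"
  define c23 where "c23 = (xs2 = [] \<or> ys3 = [] \<or> last ta2 < hd tb3)"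
  define c32 where "c32 = (xs3 = [] \<or> ys2 = [] \<or> last ta3 < hd tb2)"
  define c31 where "c31 = (xs3 = [] \<or> ys1 = [] \<or> last ta3 < hd tb1)"
  define c13 where "c13 = (xs1 = [] \<or> ys3 = [] \<or> last ta1 < hd tb3)"
  have E12: "c12 \<Longrightarrow> EE A lam (hd vP) (last vQ)" using concat_E[OF s1(2) s2(3)] h c12_def by metis
  have E21: "c21 \<Longrightarrow> EE A lam (hd vQ) (last vP)" using concat_E[OF s2(2) s1(3)] h c21_def by metis
  have E23: "c23 \<Longrightarrow> EE A lam (hd vQ) (last vR)" using concat_E[OF s2(2) s3(3)] h c23_def by metis
  have E32: "c32 \<Longrightarrow> EE A lam (hd vR) (last vQ)" using concat_E[OF s3(2) s2(3)] h c32_def by metis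
  have E31: "c31 \<Longrightarrow> EE A lam (hd vR) (last vP)" using concat_E[OF s3(2) s1(3)] h c31_def by metis
  have E13: "c13 \<Longrightarrow> EE A lam (hd vP) (last vR)" using concat_E[OF s1(2) s3(3)] h c13_def by metis
  have o12: "c12 \<Longrightarrow> hd vP = a1 \<and> last vQ = a2"
    using E12 nePQ[of "hd vP" "last vQ"] P(2) Q(2) by blast
  have o21: "c21 \<Longrightarrow> last vP = a1 \<and> hd vQ = a2"
    using E21 nePQ[of "last vP" "hd vQ"] P(2) Q(2) by blast
  have o23: "c23 \<Longrightarrow> hd vQ = a3 \<and> last vR = a4"
    using E23 neQR[of "hd vQ" "last vR"] Q(2) R(2) by blast
  have o32: "c32 \<Longrightarrow> last vQ = a3 \<and> hd vR = a4"
    using E32 neQR[of "last vQ" "hd vR"] Q(2) R(2) by blast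
  have o31: "c31 \<Longrightarrow> hd vR = a5 \<and> last vP = a0"
    using E31 neRP[of "hd vR" "last vP"] R(2) P(2) by blast
  have o13: "c13 \<Longrightarrow> last vR = a5 \<and> hd vP = a0"
    using E13 neRP[of "last vR" "hd vP"] R(2) P(2) by blast
  have p12: "c12 \<or> c21" using s1(4) s2(4) unfolding c12_def c21_def by auto
  have p23: "c23 \<or> c32" using s3(4) s2(4) unfolding c23_def c32_def by auto
  have p31: "c31 \<or> c13" using s1(4) s3(4) unfolding c31_def c13_def by auto
  have cyc1: "\<not> (\<not> c21 \<and> \<not> c32 \<and> \<not> c13)"
    using s1(4) s2(4) s3(4) unfolding c21_def c32_def c13_def by auto
  have cyc2: "\<not> (\<not> c12 \<and> \<not> c23 \<and> \<not> c31)"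
    using s1(4) s2(4) s3(4) unfolding c12_def c23_def c31_def by auto
  show False
    using o12 o21 o23 o32 o31 o13 p12 p23 p31 cyc1 cyc2 P(2) Q(2) R(2) d by metis
qed

definition uw :: "('a \<times> 'a) set \<Rightarrow> 'a set \<Rightarrow> 'a list \<Rightarrow> bool" where
  "uw A V Q \<longleftrightarrow> Q \<noteq> [] \<and> successively (\<lambda>u v. u = v \<or> und_adj A u v) Q \<and> set Q \<subseteq> V"

definition sp :: "('a \<times> 'a) set \<Rightarrow> 'a set \<Rightarrow> 'a list \<Rightarrow> bool" where
  "sp A V P \<longleftrightarrow> P \<noteq> [] \<and> distinct P \<and> successively (und_adj A) P \<and> set P \<subseteq> V"

lemma und_adj_sym: "und_adj A u v \<longleftrightarrow> und_adj A v u"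
  by (auto simp: und_adj_def)

lemma succ_distinct: "distinct Q \<Longrightarrow> successively (\<lambda>u v. u = v \<or> R u v) Q \<Longrightarrow> successively R Q"
  by (induction Q) (auto simp: successively_Cons)

lemma succ_split: "successively R (xs @ y # ws) \<longleftrightarrow> successively R (xs @ [y]) \<and> successively R (y # ws)"
  by (cases ws) (auto simp: successively_append_iff successively_Cons)

lemma walk_to_path:
  "uw A V Q \<Longrightarrow> \<exists>P. sp A V P \<and> hd P = hd Q \<and> last P = last Q \<and> set P \<subseteq> set Q"
proof (induction "length Q" arbitrary: Q rule: less_induct)
  case less
  show ?case
  proof (cases "distinct Q")
    case True
    then show ?thesis using less.prems succ_distinct unfolding uw_def sp_def by blast
  next
    case False
    then obtain xs y ys zs where Q: "Q = xs @ y # (ys @ y # zs)"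
      using not_distinct_decomp by fastforce
    let ?Q = "xs @ y # zs"
    have s: "successively (\<lambda>u v. u = v \<or> und_adj A u v) Q" using less.prems by (simp add: uw_def)
    have "successively (\<lambda>u v. u = v \<or> und_adj A u v) (xs @ [y])"
         "successively (\<lambda>u v. u = v \<or> und_adj A u v) ((y # ys) @ y # zs)"
      using s[unfolded Q] succ_split by (metis append_Cons)+
    hence "successively (\<lambda>u v. u = v \<or> und_adj A u v) (y # zs)" using succ_split by metis
    hence "successively (\<lambda>u v. u = v \<or> und_adj A u v) ?Q"
      using \<open>successively _ (xs @ [y])\<close> succ_split by metis
    hence "uw A V ?Q" using less.prems Q by (auto simp: uw_def)
    moreover have "length ?Q < length Q" using Q by simp
    moreover have "hd ?Q = hd Q" "last ?Q = last Q" using Q by (cases xs; simp)+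
    moreover have "set ?Q \<subseteq> set Q" using Q by auto
    ultimately show ?thesis using less by (metis order_trans)
  qed
qed

lemma acyc_cycle:
  assumes "und_acyclic V A" "3 \<le> length cs" "distinct cs" "set cs \<subseteq> V"
    "successively (und_adj A) cs" "und_adj A (last cs) (hd cs)"
  shows False
  using assms unfolding und_acyclic_def successively_conv_nth by blast

lemma path_unique:
  assumes acy: "und_acyclic V A"
  shows "sp A V P \<Longrightarrow> sp A V P' \<Longrightarrow> hd P = hd P' \<Longrightarrow> last P = last P' \<Longrightarrow> P = P'"
proof (induction P arbitrary: P')
  case Nil then show ?case by (simp add: sp_def)
next
  case (Cons u rest)
  have P'ne: "P' \<noteq> []" using Cons.prems(2) by (simp add: sp_def)
  then obtain rest' where P': "P' = u # rest'" using Cons.prems(3) by (cases P') auto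
  have dP0: "distinct (u # rest)" and dP'0: "distinct (u # rest')"
    using Cons.prems(1,2) P' by (simp_all add: sp_def)
  show ?case
  proof (cases rest)
    case Nil
    show ?thesis
    proof (cases rest')
      case (Cons a l)
      then have "last P' \<in> set rest'" using P' by simp
      moreover have "last P' = u" using Cons.prems(4) \<open>rest = []\<close> by simp
      ultimately show ?thesis using dP'0 by simp
    qed (simp add: Nil P')
  next
    case (Cons v ps)
    have lP: "last (u # rest) \<in> set (v # ps)" using Cons by simp
    have uni: "u \<notin> set (v # ps)" using dP0 Cons by simp
    obtain v' ps' where r': "rest' = v' # ps'"
    proof (cases rest')
      case Nil
      then have "last (u # rest) = u" using Cons.prems(4) P' by simp
      then show ?thesis using lP uni by simp
    qed
    have VP: "set (u # v # ps) \<subseteq> V" using Cons.prems(1) \<open>rest = v # ps\<close> by (simp add: sp_def)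
    have VQ: "set (u # v' # ps') \<subseteq> V" using Cons.prems(2) P' r' by (simp add: sp_def)
    have sP: "successively (und_adj A) (u # v # ps)" using Cons.prems(1) \<open>rest = v # ps\<close> by (simp add: sp_def)
    have sQ: "successively (und_adj A) (u # v' # ps')" using Cons.prems(2) P' r' by (simp add: sp_def)
    have dP: "distinct (u # v # ps)" using dP0 \<open>rest = v # ps\<close> by simp
    have dQ: "distinct (u # v' # ps')" using dP'0 r' by simp
    show ?thesis
    proof (cases "v = v'")
      case True
      have spr: "sp A V rest" "sp A V rest'"
        using VP VQ sP sQ dP dQ \<open>rest = v # ps\<close> r' unfolding sp_def successively_Cons[of _ u]
        by simp_all
      have "last rest = last rest'" using Cons.prems(4) P' \<open>rest = v # ps\<close> r' by simp
      hence "rest = rest'" using Cons.IH[OF spr] True \<open>rest = v # ps\<close> r' by simp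
      then show ?thesis using P' by simp
    next
      case False
      let ?Q = "v' # ps'"
      have "last ?Q = last (v # ps)" using Cons.prems(4) P' r' \<open>rest = v # ps\<close> by simp
      hence "last ?Q \<in> set (v # ps)" by simp
      hence "\<exists>z\<in>set ?Q. z \<in> set (v # ps)" using last_in_set[of ?Q] by blast
      then obtain ys y zs where Qs: "?Q = ys @ y # zs" "y \<in> set (v # ps)" "\<forall>z\<in>set ys. z \<notin> set (v # ps)"
        using split_list_first_prop[of ?Q "\<lambda>z. z \<in> set (v # ps)"] by blast
      obtain as bs where Ps: "v # ps = as @ y # bs" using split_list[OF Qs(2)] by blast
      define cs where "cs = (u # as @ [y]) @ rev ys"
      have len: "3 \<le> length cs"
      proof -
        have "\<not> (as = [] \<and> ys = [])"
        proof
          assume "as = [] \<and> ys = []"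
          then show False using Ps Qs(1) False by simp
        qed
        then show ?thesis unfolding cs_def by (cases as; cases ys) auto
      qed
      have dA: "distinct (u # as @ y # bs)" using dP Ps by (metis append_Cons)
      have dB: "distinct (u # ys @ y # zs)" using dQ Qs(1) by (metis append_Cons)
      have d1: "distinct (u # as @ [y])" using dA by (simp add: distinct_append)
      have d2: "distinct ys" "u \<notin> set ys" using dB by (simp_all add: distinct_append)
      have d3: "set ys \<inter> set (u # as @ [y]) = {}"
      proof -
        have "set (as @ [y]) \<subseteq> set (v # ps)" using Ps by auto
        then show ?thesis using Qs(3) d2(2) by auto
      qed
      have dist: "distinct cs" unfolding cs_def distinct_append using d1 d2 d3 by (simp add: Int_commute)
      have setV: "set cs \<subseteq> V"
      proof -
        have "set as \<subseteq> set (v # ps)" "y \<in> set (v # ps)" using Ps by auto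
        moreover have "set ys \<subseteq> set ?Q" using Qs(1) by auto
        ultimately show ?thesis unfolding cs_def using VP VQ by auto
      qed
      have "u # v # ps = (u # as) @ y # bs" using Ps by simp
      hence s1: "successively (und_adj A) (u # as @ [y])"
        using sP succ_split[of "und_adj A" "u # as" y bs] by simp
      have sQ': "successively (und_adj A) ?Q" using sQ by (simp add: successively_Cons)
      have s2: "successively (und_adj A) (ys @ [y])"
        using sQ' Qs(1) succ_split[of "und_adj A" ys y zs] by simp
      have s2': "successively (und_adj A) (rev ys)"
        using s2 by (simp add: successively_append_iff und_adj_sym)
      have s3: "ys \<noteq> [] \<Longrightarrow> und_adj A y (last ys)"
        using s2 by (simp add: successively_append_iff und_adj_sym)
      have j: "ys = [] \<or> und_adj A (last (u # as @ [y])) (hd (rev ys))"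
        using s3 by (cases "ys = []") (simp_all add: hd_rev)
      have succ: "successively (und_adj A) cs"
        unfolding cs_def successively_append_iff using s1 s2' j by blast
      have "und_adj A u v'" using sQ by simp
      moreover have "last cs = v'"
        using Qs(1) unfolding cs_def by (cases ys) (auto simp: last_rev)
      ultimately have "und_adj A (last cs) (hd cs)" unfolding cs_def by (simp add: und_adj_sym)
      then show ?thesis using acyc_cycle[OF acy len dist setV succ] by simp
    qed
  qed
qed

lemma walk_contains_path:
  assumes "und_acyclic V A" "sp A V P" "uw A V Q" "hd P = hd Q" "last P = last Q"
  shows "set P \<subseteq> set Q"
proof -
  obtain P' where "sp A V P'" "hd P' = hd Q" "last P' = last Q" "set P' \<subseteq> set Q"
    using walk_to_path[OF assms(3)] by blast
  then show ?thesis using path_unique[OF assms(1,2)] assms(4,5) by metis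
qed

lemma uw_rev: "uw A V Q \<Longrightarrow> uw A V (rev Q)"
  unfolding uw_def by (auto simp: und_adj_sym elim: successively_mono)

lemma median:
  assumes acy: "und_acyclic V A" and w: "uw A V Q1" "uw A V Q2" "uw A V Q3"
    and j: "last Q1 = hd Q2" "last Q2 = hd Q3" "last Q3 = hd Q1"
  shows "\<exists>x. x \<in> set Q1 \<and> x \<in> set Q2 \<and> x \<in> set Q3"
proof -
  obtain P where P: "sp A V P" "hd P = hd Q1" "last P = last Q1" "set P \<subseteq> set Q1"
    using walk_to_path[OF w(1)] by blast
  obtain R where R: "sp A V R" "hd R = hd (rev Q3)" "last R = last (rev Q3)" "set R \<subseteq> set (rev Q3)"
    using walk_to_path[OF uw_rev[OF w(3)]] by blast
  have ne: "P \<noteq> []" "R \<noteq> []" "Q3 \<noteq> []" using P(1) R(1) w(3) by (simp_all add: sp_def uw_def)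
  have "hd R = hd Q1" using R(2) ne(3) j(3) by (simp add: hd_rev)
  hence "last (rev P) \<in> set R" using ne P(2) hd_in_set[OF ne(2)] by (simp add: last_rev)
  moreover have "last (rev P) \<in> set (rev P)" using ne(1) by (simp add: last_rev)
  ultimately have "\<exists>z\<in>set (rev P). z \<in> set R" by blast
  then obtain ys x zs where Ps: "rev P = ys @ x # zs" "x \<in> set R" "\<forall>z\<in>set ys. z \<notin> set R"
    using split_list_first_prop[of "rev P" "\<lambda>z. z \<in> set R"] by blast
  obtain us ws where Rs: "R = us @ x # ws" using split_list[OF Ps(2)] by blast
  define Pt where "Pt = ys @ x # ws"
  have dP: "distinct (ys @ x # zs)" using P(1) Ps(1) by (metis sp_def distinct_rev)
  have dR: "distinct (us @ x # ws)" using R(1) Rs by (simp add: sp_def)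
  have sP0: "successively (und_adj A) P" using P(1) by (simp add: sp_def)
  have "successively (\<lambda>a b. und_adj A b a) P" using sP0 by (simp add: und_adj_sym)
  hence sP: "successively (und_adj A) (ys @ x # zs)" using Ps(1) by (metis successively_rev)
  have sR: "successively (und_adj A) (us @ x # ws)" using R(1) Rs by (simp add: sp_def)
  have s1: "successively (und_adj A) (ys @ [x])" using sP succ_split by fast
  have s2: "successively (und_adj A) (x # ws)" using sR succ_split by fast
  have sPt: "successively (und_adj A) Pt" unfolding Pt_def using succ_split s1 s2 by fast
  have d1: "distinct ys" "x \<notin> set ys" using dP by simp_all
  have d2: "distinct (x # ws)" using dR by simp
  have d3: "set ys \<inter> set (x # ws) = {}" using Ps(3) Rs by auto
  have "distinct Pt" unfolding Pt_def using d1 d2 d3 by (simp add: distinct_append)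
  moreover have "set Pt \<subseteq> V"
  proof -
    have "set ys \<subseteq> set P" using Ps(1) by (metis set_rev set_append Un_upper1)
    moreover have "set (x # ws) \<subseteq> set R" using Rs by auto
    ultimately show ?thesis using P(1) R(1) unfolding Pt_def sp_def by auto
  qed
  ultimately have spPt: "sp A V Pt" using sPt by (simp add: sp_def Pt_def)
  have "hd Pt = hd (rev P)" using Ps(1) unfolding Pt_def by (cases ys) auto
  hence "hd Pt = hd Q2" using P(3) ne j(1) by (simp add: hd_rev)
  moreover have "last Pt = last Q2" using Rs R(3) j(2) ne unfolding Pt_def by (simp add: last_rev)
  ultimately have "set Pt \<subseteq> set Q2" using walk_contains_path[OF acy spPt w(2)] by blast
  hence "x \<in> set Q2" unfolding Pt_def by simp
  moreover have "x \<in> set P" using Ps(1) by (metis set_rev in_set_conv_decomp)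
  hence "x \<in> set Q1" using P(4) by blast
  moreover have "x \<in> set Q3" using Ps(2) R(4) by auto
  ultimately show ?thesis by blast
qed

lemma tp_uw:
  assumes "A \<subseteq> V \<times> V" "temporal_path A lam vs ts"
  shows "uw A V vs"
proof -
  have tw: "twalk A lam vs ts" "2 \<le> length vs" using assms(2) by (auto simp: tp_iff)
  have arcs: "\<forall>i < length vs - 1. (vs ! i, vs ! Suc i) \<in> A" using tw(1) by (auto simp: twalk_iff)
  have "successively (und_adj A) vs" unfolding successively_conv_nth und_adj_def using arcs
    by (metis Suc_lessE diff_Suc_1 Suc_less_eq)
  hence s: "successively (\<lambda>u v. u = v \<or> und_adj A u v) vs" by (auto elim: successively_mono)
  have "set vs \<subseteq> V"
  proof
    fix x assume "x \<in> set vs"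
    then obtain k where k: "k < length vs" "vs ! k = x" by (auto simp: in_set_conv_nth)
    show "x \<in> V"
    proof (cases "k < length vs - 1")
      case True then show ?thesis using arcs k assms(1) by blast
    next
      case False
      then have "k = Suc (k - 1)" "k - 1 < length vs - 1" using k tw(2) by auto
      then show ?thesis using arcs[rule_format, of "k-1"] k assms(1) by auto
    qed
  qed
  then show ?thesis using s tw(2) by (auto simp: uw_def)
qed

lemma uw_app: "uw A V Q \<Longrightarrow> uw A V Q' \<Longrightarrow> last Q = hd Q' \<Longrightarrow> uw A V (Q @ Q')"
  unfolding uw_def by (auto simp: successively_append_iff)

theorem mainTheorem10:
  fixes V :: "'a set" and A :: "('a \<times> 'a) set"
    and lam :: "'a \<times> 'a \<Rightarrow> nat set" and tmax :: nat
  assumes "temporal_oriented_tree V A lam tmax"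
  shows "\<not> has_induced_cycle V (conn_graph_adj V A lam) 6"
proof
  assume "has_induced_cycle V (conn_graph_adj V A lam) 6"
  then obtain c where inj: "inj_on c {0..<6}" and cV: "c ` {0..<6} \<subseteq> V" and
    adj: "\<forall>i<6. \<forall>j<6. i \<noteq> j \<longrightarrow> (conn_graph_adj V A lam (c i) (c j) \<longleftrightarrow> (j = Suc i mod 6 \<or> i = Suc j mod 6))"
    unfolding has_induced_cycle_def by blast
  have AV: "A \<subseteq> V \<times> V" and acy: "und_acyclic V A"
    using assms unfolding temporal_oriented_tree_def oriented_tree_def by auto
  have dist: "\<And>i j. i<6 \<Longrightarrow> j<6 \<Longrightarrow> i\<noteq>j \<Longrightarrow> c i \<noteq> c j" using inj by (auto simp: inj_on_def)
  have NE: "\<And>i j. i<6 \<Longrightarrow> j<6 \<Longrightarrow> i\<noteq>j \<Longrightarrow> j \<noteq> Suc i mod 6 \<Longrightarrow> i \<noteq> Suc j mod 6 \<Longrightarrow> \<not> EE A lam (c i) (c j)"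
  proof
    fix i j assume h: "i<6" "j<6" "i\<noteq>j" "j \<noteq> Suc i mod 6" "i \<noteq> Suc j mod 6" "EE A lam (c i) (c j)"
    have "c i \<noteq> c j" using dist h by blast
    hence "temporal_path_from_to A lam (c i) (c j)" using h(6) by (simp add: EE_def)
    hence "conn_graph_adj V A lam (c i) (c j)" using cV h \<open>c i \<noteq> c j\<close>
      by (auto simp: conn_graph_adj_def temporally_connected_def)
    then show False using adj h by blast
  qed
  have ED: "\<forall>i. \<exists>p. i < 6 \<longrightarrow> temporal_path A lam (fst p) (snd p) \<and>
     ((hd (fst p) = c i \<and> last (fst p) = c ((i + 1) mod 6)) \<or> (hd (fst p) = c ((i + 1) mod 6) \<and> last (fst p) = c i))"
  proof
    fix i
    show "\<exists>p. i < 6 \<longrightarrow> temporal_path A lam (fst p) (snd p) \<and>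
     ((hd (fst p) = c i \<and> last (fst p) = c ((i + 1) mod 6)) \<or> (hd (fst p) = c ((i + 1) mod 6) \<and> last (fst p) = c i))"
    proof (cases "i < 6")
      case True
      have "i \<noteq> (i + 1) mod 6" "(i + 1) mod 6 < 6" using True by (auto simp: mod_Suc)
      hence "conn_graph_adj V A lam (c i) (c ((i + 1) mod 6))" using adj True by auto
      hence "temporal_path_from_to A lam (c i) (c ((i + 1) mod 6)) \<or> temporal_path_from_to A lam (c ((i + 1) mod 6)) (c i)"
        by (simp add: conn_graph_adj_def temporally_connected_def)
      then show ?thesis unfolding temporal_path_from_to_def by auto
    qed simp
  qed
  then obtain f where f: "\<And>i. i < 6 \<Longrightarrow> temporal_path A lam (fst (f i)) (snd (f i)) \<and>
     ((hd (fst (f i)) = c i \<and> last (fst (f i)) = c ((i + 1) mod 6)) \<or> (hd (fst (f i)) = c ((i + 1) mod 6) \<and> last (fst (f i)) = c i))"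
    using choice[OF ED] by blast
  define PV where "PV i = fst (f i)" for i :: nat
  define UW where "UW i = (if hd (PV i) = c i then PV i else rev (PV i))" for i :: nat
  have PP: "\<And>i. i < 6 \<Longrightarrow> temporal_path A lam (PV i) (snd (f i)) \<and>
     ((hd (PV i) = c i \<and> last (PV i) = c ((i + 1) mod 6)) \<or> (hd (PV i) = c ((i + 1) mod 6) \<and> last (PV i) = c i))"
    using f unfolding PV_def by blast
  have UWp: "\<And>i. i < 6 \<Longrightarrow> uw A V (UW i) \<and> hd (UW i) = c i \<and> last (UW i) = c ((i + 1) mod 6) \<and> set (UW i) = set (PV i)"
  proof -
    fix i :: nat assume i: "i < 6"
    have "PV i \<noteq> []" using PP[OF i] by (auto simp: tp_iff)
    moreover have "uw A V (PV i)" using tp_uw[OF AV] PP[OF i] by blast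
    ultimately show "uw A V (UW i) \<and> hd (UW i) = c i \<and> last (UW i) = c ((i + 1) mod 6) \<and> set (UW i) = set (PV i)"
      using PP[OF i] uw_rev unfolding UW_def by (auto simp: hd_rev last_rev)
  qed
  have U0: "uw A V (UW 0)" "hd (UW 0) = c 0" "last (UW 0) = c 1" "set (UW 0) = set (PV 0)" using UWp[of 0] by auto
  have U1: "uw A V (UW 1)" "hd (UW 1) = c 1" "last (UW 1) = c 2" "set (UW 1) = set (PV 1)" using UWp[of 1] by (auto simp: numeral_2_eq_2)
  have U2: "uw A V (UW 2)" "hd (UW 2) = c 2" "last (UW 2) = c 3" "set (UW 2) = set (PV 2)" using UWp[of 2] by auto
  have U3: "uw A V (UW 3)" "hd (UW 3) = c 3" "last (UW 3) = c 4" "set (UW 3) = set (PV 3)" using UWp[of 3] by auto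
  have U4: "uw A V (UW 4)" "hd (UW 4) = c 4" "last (UW 4) = c 5" "set (UW 4) = set (PV 4)" using UWp[of 4] by auto
  have U5: "uw A V (UW 5)" "hd (UW 5) = c 5" "last (UW 5) = c 0" "set (UW 5) = set (PV 5)" using UWp[of 5] by auto
  have ne: "\<And>i. i < 6 \<Longrightarrow> UW i \<noteq> []" using UWp by (auto simp: uw_def)
  have "\<exists>x. x \<in> set (UW 0 @ UW 1) \<and> x \<in> set (UW 2 @ UW 3) \<and> x \<in> set (UW 4 @ UW 5)"
    apply (rule median[OF acy])
    using U0 U1 U2 U3 U4 U5 ne[of 0] ne[of 1] ne[of 2] ne[of 3] ne[of 4] ne[of 5]
    by (auto intro!: uw_app)
  then obtain x where x: "x \<in> set (PV 0) \<or> x \<in> set (PV 1)" "x \<in> set (PV 2) \<or> x \<in> set (PV 3)"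
    "x \<in> set (PV 4) \<or> x \<in> set (PV 5)"
    using U0 U1 U2 U3 U4 U5 by auto
  have P0: "temporal_path A lam (PV 0) (snd (f 0))" "(hd (PV 0) = c 0 \<and> last (PV 0) = c 1) \<or> (hd (PV 0) = c 1 \<and> last (PV 0) = c 0)" using PP[of 0] by auto
  have P1: "temporal_path A lam (PV 1) (snd (f 1))" "(hd (PV 1) = c 1 \<and> last (PV 1) = c 2) \<or> (hd (PV 1) = c 2 \<and> last (PV 1) = c 1)" using PP[of 1] by (auto simp: numeral_2_eq_2)
  have P2: "temporal_path A lam (PV 2) (snd (f 2))" "(hd (PV 2) = c 2 \<and> last (PV 2) = c 3) \<or> (hd (PV 2) = c 3 \<and> last (PV 2) = c 2)" using PP[of 2] by auto
  have P3: "temporal_path A lam (PV 3) (snd (f 3))" "(hd (PV 3) = c 3 \<and> last (PV 3) = c 4) \<or> (hd (PV 3) = c 4 \<and> last (PV 3) = c 3)" using PP[of 3] by auto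
  have P4: "temporal_path A lam (PV 4) (snd (f 4))" "(hd (PV 4) = c 4 \<and> last (PV 4) = c 5) \<or> (hd (PV 4) = c 5 \<and> last (PV 4) = c 4)" using PP[of 4] by auto
  have P5: "temporal_path A lam (PV 5) (snd (f 5))" "(hd (PV 5) = c 5 \<and> last (PV 5) = c 0) \<or> (hd (PV 5) = c 0 \<and> last (PV 5) = c 5)" using PP[of 5] by auto
  have d: "c 0 \<noteq> c 1" "c 1 \<noteq> c 2" "c 2 \<noteq> c 3" "c 3 \<noteq> c 4" "c 4 \<noteq> c 5" "c 5 \<noteq> c 0"
    using dist by auto
  have N: "\<not> EE A lam (c 0) (c 2)" "\<not> EE A lam (c 2) (c 0)" "\<not> EE A lam (c 0) (c 3)" "\<not> EE A lam (c 3) (c 0)"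
    "\<not> EE A lam (c 0) (c 4)" "\<not> EE A lam (c 4) (c 0)" "\<not> EE A lam (c 1) (c 3)" "\<not> EE A lam (c 3) (c 1)"
    "\<not> EE A lam (c 1) (c 4)" "\<not> EE A lam (c 4) (c 1)" "\<not> EE A lam (c 1) (c 5)" "\<not> EE A lam (c 5) (c 1)"
    "\<not> EE A lam (c 2) (c 4)" "\<not> EE A lam (c 4) (c 2)" "\<not> EE A lam (c 2) (c 5)" "\<not> EE A lam (c 5) (c 2)"
    "\<not> EE A lam (c 3) (c 5)" "\<not> EE A lam (c 5) (c 3)"
    using NE by simp_all
  have o03: "\<not> (x \<in> set (PV 0) \<and> x \<in> set (PV 3))"
  proof
    assume "x \<in> set (PV 0) \<and> x \<in> set (PV 3)"
    then show False using pair_E[OF P0(1) P3(1)] P0(2) P3(2) N by auto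
  qed
  have o14: "\<not> (x \<in> set (PV 1) \<and> x \<in> set (PV 4))"
  proof
    assume "x \<in> set (PV 1) \<and> x \<in> set (PV 4)"
    then show False using pair_E[OF P1(1) P4(1)] P1(2) P4(2) N by auto
  qed
  have o25: "\<not> (x \<in> set (PV 2) \<and> x \<in> set (PV 5))"
  proof
    assume "x \<in> set (PV 2) \<and> x \<in> set (PV 5)"
    then show False using pair_E[OF P2(1) P5(1)] P2(2) P5(2) N by auto
  qed
  have t024: "\<not> (x \<in> set (PV 0) \<and> x \<in> set (PV 2) \<and> x \<in> set (PV 4))"
  proof
    assume h: "x \<in> set (PV 0) \<and> x \<in> set (PV 2) \<and> x \<in> set (PV 4)"
    show False
      apply (rule triple[OF P0 P2 P4 _ _ _ d(1) d(3) d(5)])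
      using h N by auto
  qed
  have t135: "\<not> (x \<in> set (PV 1) \<and> x \<in> set (PV 3) \<and> x \<in> set (PV 5))"
  proof
    assume h: "x \<in> set (PV 1) \<and> x \<in> set (PV 3) \<and> x \<in> set (PV 5)"
    show False
      apply (rule triple[OF P1 P3 P5 _ _ _ d(2) d(4) d(6)])
      using h N by auto
  qed
  show False using x o03 o14 o25 t024 t135 by blast
qed

end
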